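(* Let $\boldsymbol{A}\in\mathbb{R}^{n\times m}$ have full column rank and rows $\boldsymbol{a}_1,\dots,\boldsymbol{a}_n$. Let $\boldsymbol{b}\in\mathbb{R}^n$ (a vector, not to be confused with the batch size $b$), and let $\boldsymbol{x}_*=\arg\min_{\boldsymbol{x}}\frac12\|\boldsymbol{A}\boldsymbol{x}-\boldsymbol{b}\|_2^2$. Let the batch size $b$ divide $n$, let $d=n/b$, and let $\tau_1,\dots,\tau_d$ be a partition of $\{1,\dots,n\}$ into sets of size $b$. Let $\boldsymbol{A}_{\tau_i}$ and $\boldsymbol{b}_{\tau_i}$ denote the rows of $\boldsymbol{A}$ and the entries of $\boldsymbol{b}$ indexed by $\tau_i$. Let $\|\cdot\|$ be the spectral norm and $\sigma_{\min}(\boldsymbol{A})$ the smallest singular value of $\boldsymbol{A}$. Define $$p(\tau_i)=\frac{b}{2n}+\frac12\cdot\frac{\|\boldsymbol{A}_{\tau_i}\|^2}{\sum_{j=1}^d\|\boldsymbol{A}_{\tau_j}\|^2}.$$ Fix $\varepsilon>0$ and $\boldsymbol{x}_0$, and let $\varepsilon_0=\|\boldsymbol{x}_0-\boldsymbol{x}_*\|_2^2$. Consider the iteration $$\boldsymbol{x}_{k+1}=\boldsymbol{x}_k-\frac{\gamma}{p(\tau_{i_k})}\sum_{j\in\tau_{i_k}}(\langle\boldsymbol{a}_j,\boldsymbol{x}_k\rangle-b_j)\boldsymbol{a}_j,$$ with batches drawn i.i.d. from $p$ and step size $$\gamma=\frac{\frac14\varepsilon}{\varepsilon\sum_{i=1}^d\|\boldsymbol{A}_{\tau_i}\|^2+d\,\sigma_{\min}^{-2}(\boldsymbol{A})\sum_{i=1}^d\|\boldsymbol{A}_{\tau_i}\|^2\|\boldsymbol{A}_{\tau_i}\boldsymbol{x}_*-\boldsymbol{b}_{\tau_i}\|_2^2}.$$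 Then after $$k=\Big\lceil4\log(2\varepsilon_0/\varepsilon)\Big(\sigma_{\min}^{-2}(\boldsymbol{A})\sum_{i=1}^d\|\boldsymbol{A}_{\tau_i}\|^2+\frac{d\,\sigma_{\min}^{-4}(\boldsymbol{A})\sum_{i=1}^d\|\boldsymbol{A}_{\tau_i}\|^2\|\boldsymbol{A}_{\tau_i}\boldsymbol{x}_*-\boldsymbol{b}_{\tau_i}\|_2^2}{\varepsilon}\Big)\Big\rceil$$ iterations one has $\mathbb{E}^{(p)}\|\boldsymbol{x}_k-\boldsymbol{x}_*\|_2^2\le\varepsilon$.
   Context: $\mathbb{E}^{(p)}$ denotes expectation over the batch indices drawn independently at each iteration according to $p$. *)

theory Defs
  imports "HOL-Analysis.Analysis"
begin

text \<open>Rows of A are A $ j (j :: 'n), columns indexed by 'm.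
  The submatrix A_T (rows indexed by T) is represented by A with the rows outside T
  replaced by zero; this does not change its spectral norm.\<close>

definition block_map :: "real^'m^'n \<Rightarrow> 'n set \<Rightarrow> real^'m \<Rightarrow> real^'n" where
  "block_map A T x = (\<chi> j. if j \<in> T then (A $ j) \<bullet> x else 0)"

definition block_norm :: "real^'m^'n \<Rightarrow> 'n set \<Rightarrow> real" where
  "block_norm A T = onorm (block_map A T)"

definition block_res_sq :: "real^'m^'n \<Rightarrow> real^'n \<Rightarrow> 'n set \<Rightarrow> real^'m \<Rightarrow> real" where
  "block_res_sq A b T x = (\<Sum>j\<in>T. ((A $ j) \<bullet> x - b $ j)^2)"

definition sigma_min :: "real^'m^'n \<Rightarrow> real" where
  "sigma_min A = Inf {norm (A *v x) | x. norm x = 1}"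

definition batch_prob :: "real^'m^'n \<Rightarrow> (nat \<Rightarrow> 'n set) \<Rightarrow> nat \<Rightarrow> nat \<Rightarrow> nat \<Rightarrow> real" where
  "batch_prob A tau d bs i =
     real bs / (2 * real CARD('n)) +
     (1/2) * (block_norm A (tau i))^2 / (\<Sum>j<d. (block_norm A (tau j))^2)"

definition sgd_step :: "real^'m^'n \<Rightarrow> real^'n \<Rightarrow> (nat \<Rightarrow> 'n set) \<Rightarrow> (nat \<Rightarrow> real) \<Rightarrow> real
      \<Rightarrow> real^'m \<Rightarrow> nat \<Rightarrow> real^'m" where
  "sgd_step A b tau p \<gamma> x i =
     x - (\<gamma> / p i) *\<^sub>R (\<Sum>j\<in>tau i. ((A $ j) \<bullet> x - b $ j) *\<^sub>R (A $ j))"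

definition sgd_iter :: "real^'m^'n \<Rightarrow> real^'n \<Rightarrow> (nat \<Rightarrow> 'n set) \<Rightarrow> (nat \<Rightarrow> real) \<Rightarrow> real
      \<Rightarrow> real^'m \<Rightarrow> nat list \<Rightarrow> real^'m" where
  "sgd_iter A b tau p \<gamma> x0 is = foldl (sgd_step A b tau p \<gamma>) x0 is"

text \<open>Expectation of \<parallel>x_k - x_*\<parallel>^2 when i_0,...,i_{k-1} are drawn i.i.d. from p on {0..<d}:
  sum over all index sequences weighted by their probability.\<close>
definition expected_sq_err :: "real^'m^'n \<Rightarrow> real^'n \<Rightarrow> (nat \<Rightarrow> 'n set) \<Rightarrow> nat \<Rightarrow> (nat \<Rightarrow> real)
      \<Rightarrow> real \<Rightarrow> real^'m \<Rightarrow> real^'m \<Rightarrow> nat \<Rightarrow> real" where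
  "expected_sq_err A b tau d p \<gamma> x0 xs k =
     (\<Sum>is\<in>{is. set is \<subseteq> {..<d} \<and> length is = k}.
        (\<Prod>i\<leftarrow>is. p i) * (norm (sgd_iter A b tau p \<gamma> x0 is - xs))^2)"

end

theory Submission
  imports Defs
begin

lemma lists_snoc_eq:
  "{xs. set xs \<subseteq> A \<and> length xs = Suc n} =
    (\<lambda>(xs, i). xs @ [i]) ` ({xs. set xs \<subseteq> A \<and> length xs = n} \<times> A)"
proof (rule set_eqI, rule iffI)
  fix ys assume "ys \<in> {xs. set xs \<subseteq> A \<and> length xs = Suc n}"
  then obtain zs z where "ys = zs @ [z]" "length zs = n" "set ys \<subseteq> A"
    by (auto simp: length_Suc_conv_rev)
  thus "ys \<in> (\<lambda>(xs, i). xs @ [i]) ` ({xs. set xs \<subseteq> A \<and> length xs = n} \<times> A)"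
    by (auto intro!: image_eqI[where x="(zs,z)"])
qed auto

lemma exp_sum_gen:
  fixes F :: "'a::real_normed_vector \<Rightarrow> nat \<Rightarrow> 'a" and p :: "nat \<Rightarrow> real"
  assumes p_nn: "\<And>i. i < d \<Longrightarrow> p i \<ge> 0"
    and p_sum: "(\<Sum>i<d. p i) = 1"
    and step: "\<And>x. (\<Sum>i<d. p i * (norm (F x i - xs))^2) \<le> q * (norm (x - xs))^2 + D"
    and q_nn: "q \<ge> 0"
  shows "(\<Sum>is\<in>{is. set is \<subseteq> {..<d} \<and> length is = k}. (\<Prod>i\<leftarrow>is. p i))= 1
     \<and> (\<Sum>is\<in>{is. set is \<subseteq> {..<d} \<and> length is = k}.
        (\<Prod>i\<leftarrow>is. p i) * (norm (foldl F x0 is - xs))^2)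
       \<le> q^k * (norm (x0 - xs))^2 + D * (\<Sum>j<k. q^j)"
proof (induction k)
  case 0
  have "{is. set is \<subseteq> {..<d} \<and> length is = 0} = {[]}" by auto
  then show ?case by simp
next
  case (Suc k)
  let ?L = "{is. set is \<subseteq> {..<d} \<and> length is = k}"
  have fin: "finite ?L" by (rule finite_lists_length_eq) simp
  have inj: "inj_on (\<lambda>(xs, i). xs @ [i]) (?L \<times> {..<d})"
    by (auto simp: inj_on_def)
  have P: "\<And>is. is \<in> ?L \<Longrightarrow> (\<Prod>i\<leftarrow>is. p i) \<ge> 0"
    using p_nn by (force intro!: prod_list_nonneg)
  have re: "(\<Sum>is\<in>{is. set is \<subseteq> {..<d} \<and> length is = Suc k}. g is)
        = (\<Sum>is\<in>?L. \<Sum>i<d. g (is @ [i]))" for g :: "nat list \<Rightarrow> real"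
  proof -
    have "(\<Sum>is\<in>{is. set is \<subseteq> {..<d} \<and> length is = Suc k}. g is)
       = (\<Sum>x\<in>?L \<times> {..<d}. g ((\<lambda>(xs, i). xs @ [i]) x))"
      unfolding lists_snoc_eq by (rule sum.reindex[OF inj, unfolded comp_def])
    also have "\<dots> = (\<Sum>is\<in>?L. \<Sum>i<d. g (is @ [i]))"
      by (simp add: sum.cartesian_product split_def)
    finally show "(\<Sum>is\<in>{is. set is \<subseteq> {..<d} \<and> length is = Suc k}. g is)
        = (\<Sum>is\<in>?L. \<Sum>i<d. g (is @ [i]))" .
  qed
  have s1: "(\<Sum>is\<in>{is. set is \<subseteq> {..<d} \<and> length is = Suc k}. (\<Prod>i\<leftarrow>is. p i)) = 1"
    unfolding re using Suc.IH
    by (simp add: sum_distrib_left[symmetric] p_sum)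
  have "(\<Sum>is\<in>{is. set is \<subseteq> {..<d} \<and> length is = Suc k}.
        (\<Prod>i\<leftarrow>is. p i) * (norm (foldl F x0 is - xs))^2)
     = (\<Sum>is\<in>?L. (\<Prod>i\<leftarrow>is. p i) * (\<Sum>i<d. p i * (norm (F (foldl F x0 is) i - xs))^2))"
    unfolding re by (simp add: sum_distrib_left mult.assoc mult.left_commute)
  also have "\<dots> \<le> (\<Sum>is\<in>?L. (\<Prod>i\<leftarrow>is. p i) * (q * (norm (foldl F x0 is - xs))^2 + D))"
    by (intro sum_mono mult_left_mono step P) auto
  also have "\<dots> = q * (\<Sum>is\<in>?L. (\<Prod>i\<leftarrow>is. p i) * (norm (foldl F x0 is - xs))^2)
       + D * (\<Sum>is\<in>?L. (\<Prod>i\<leftarrow>is. p i))"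
    by (simp add: algebra_simps sum.distrib sum_distrib_left)
  also have "\<dots> \<le> q * (q^k * (norm (x0 - xs))^2 + D * (\<Sum>j<k. q^j)) + D"
    using Suc.IH q_nn by (auto intro: mult_left_mono)
  also have "\<dots> = q^Suc k * (norm (x0 - xs))^2 + D * (\<Sum>j<Suc k. q^j)"
    by (simp only: sum.lessThan_Suc_shift) (simp add: algebra_simps sum_distrib_left)
  finally show ?case using s1 by simp
qed

lemma bm_linear: "bounded_linear (block_map A T)"
proof -
  have "linear (block_map A T)"
    by (rule linearI) (auto simp: block_map_def vec_eq_iff inner_add_right inner_scaleR_right)
  thus ?thesis by (simp add: linear_conv_bounded_linear)
qed

lemma bm_norm_le: "norm (block_map A T x) \<le> block_norm A T * norm x"
  unfolding block_norm_def by (rule onorm[OF bm_linear])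

lemma bm_norm_sq: "(norm (block_map A T x))^2 = (\<Sum>j\<in>T. ((A $ j) \<bullet> x)^2)"
proof -
  have "(norm (block_map A T x))^2 = (\<Sum>j\<in>UNIV. (if j \<in> T then ((A $ j) \<bullet> x)^2 else 0))"
    unfolding power2_norm_eq_inner by (simp add: inner_vec_def block_map_def power2_eq_square if_distrib cong: if_cong)
  also have "\<dots> = (\<Sum>j\<in>T. ((A $ j) \<bullet> x)^2)"
    by (simp add: sum.If_cases)
  finally show ?thesis .
qed

lemma comb_norm_sq:
  fixes A :: "real^'m^'n"
  shows "(norm (\<Sum>j\<in>T. c j *\<^sub>R (A $ j)))^2 \<le> (block_norm A T)^2 * (\<Sum>j\<in>T. (c j)^2)"
proof -
  define w where "w = (\<Sum>j\<in>T. c j *\<^sub>R (A $ j))"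
  define cv :: "real^'n" where "cv = (\<chi> j. if j \<in> T then c j else 0)"
  have cvn: "(norm cv)^2 = (\<Sum>j\<in>T. (c j)^2)"
  proof -
    have "(norm cv)^2 = (\<Sum>j\<in>UNIV. (if j \<in> T then (c j)^2 else 0))"
      unfolding power2_norm_eq_inner by (simp add: inner_vec_def cv_def power2_eq_square if_distrib cong: if_cong)
    also have "\<dots> = (\<Sum>j\<in>T. (c j)^2)" by (simp add: sum.If_cases)
    finally show ?thesis .
  qed
  have "(norm w)^2 = w \<bullet> w" by (simp add: power2_norm_eq_inner)
  also have "\<dots> = (\<Sum>j\<in>T. c j * ((A $ j) \<bullet> w))"
    by (simp add: w_def inner_sum_left)
  also have "\<dots> = cv \<bullet> block_map A T w"
  proof -
    have "cv \<bullet> block_map A T w = (\<Sum>j\<in>UNIV. (if j \<in> T then c j * ((A $ j) \<bullet> w) else 0))"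
      by (simp add: inner_vec_def cv_def block_map_def if_distrib cong: if_cong)
    also have "\<dots> = (\<Sum>j\<in>T. c j * ((A $ j) \<bullet> w))" by (simp add: sum.If_cases)
    finally show ?thesis by simp
  qed
  also have "\<dots> \<le> norm cv * norm (block_map A T w)" by (rule norm_cauchy_schwarz)
  also have "\<dots> \<le> norm cv * (block_norm A T * norm w)"
    by (intro mult_left_mono bm_norm_le) simp
  finally have H: "(norm w)^2 \<le> norm cv * block_norm A T * norm w" by simp
  have "norm w \<le> norm cv * block_norm A T"
  proof (cases "norm w = 0")
    case True
    have "block_norm A T \<ge> 0" unfolding block_norm_def by (rule onorm_pos_le[OF bm_linear])
    then show ?thesis using True by simp
  next
    case False
    then have "norm w > 0" by simp
    with H show ?thesis by (simp add: power2_eq_square)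
  qed
  hence "(norm w)^2 \<le> (norm cv * block_norm A T)^2" by (intro power_mono) auto
  thus ?thesis by (simp add: w_def power_mult_distrib cvn mult.commute)
qed

lemma Av_norm_sq: fixes A :: "real^'m^'n" shows "(norm (A *v x))^2 = (\<Sum>j\<in>UNIV. ((A $ j) \<bullet> x)^2)"
proof -
  have "(norm (A *v x))^2 = (\<Sum>j\<in>UNIV. (A *v x) $ j * (A *v x) $ j)"
    unfolding power2_norm_eq_inner inner_vec_def by simp
  also have "\<dots> = (\<Sum>j\<in>UNIV. ((A $ j) \<bullet> x)^2)"
    by (simp only: matrix_vector_mul_component power2_eq_square)
  finally show ?thesis .
qed

lemma young:
  fixes u v :: "'a::real_inner"
  assumes "t > 0"
  shows "(norm (u + v))^2 \<le> (1 + t) * (norm u)^2 + (1 + 1/t) * (norm v)^2"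
proof -
  have "(norm (u+v))^2 = (norm u)^2 + 2 * (u \<bullet> v) + (norm v)^2"
    by (simp add: power2_norm_eq_inner inner_add_left inner_add_right inner_commute)
  moreover have "u \<bullet> v \<le> norm u * norm v" by (rule norm_cauchy_schwarz)
  moreover have "2 * (norm u * norm v) \<le> t * (norm u)^2 + (norm v)^2 / t"
  proof -
    have "0 \<le> (t * norm u - norm v)^2 / t" using assms by simp
    also have "\<dots> = t * (norm u)^2 + (norm v)^2 / t - 2 * (norm u * norm v)"
      using assms by (simp add: field_simps power2_eq_square)
    finally show ?thesis by simp
  qed
  ultimately show ?thesis by (simp add: algebra_simps)
qed

lemma sigma_props:
  fixes A :: "real^'m^'n"
  assumes inj: "inj ((*v) A)"
  shows "sigma_min A > 0" and "\<And>e. (sigma_min A)^2 * (norm e)^2 \<le> (norm (A *v e))^2"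
proof -
  let ?U = "{norm (A *v x) | x. norm x = 1}"
  obtain u :: "real^'m" where u: "norm u = 1" using vector_choose_size[of 1] by auto
  have ne: "?U \<noteq> {}" using u by blast
  have bdd: "bdd_below ?U" by (rule bdd_belowI[of _ 0]) auto
  have low: "sigma_min A \<le> norm (A *v x)" if "norm x = 1" for x
    unfolding sigma_min_def by (rule cInf_lower[OF _ bdd]) (use that in blast)
  have sph: "sphere (0::real^'m) 1 \<noteq> {}" using u by (auto simp: sphere_def)
  have cont: "continuous_on (sphere (0::real^'m) 1) (\<lambda>x. norm (A *v x))"
    by (intro continuous_intros)
  obtain x0 where x0: "x0 \<in> sphere 0 1" "\<forall>y\<in>sphere 0 1. norm (A *v x0) \<le> norm (A *v y)"
    using continuous_attains_inf[OF compact_sphere sph cont] by blast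
  have "A *v x0 \<noteq> 0"
  proof
    assume "A *v x0 = 0"
    hence "A *v x0 = A *v 0" by simp
    hence "x0 = 0" using inj by (metis injD)
    thus False using x0(1) by simp
  qed
  hence pos: "norm (A *v x0) > 0" by simp
  have "norm (A *v x0) \<le> sigma_min A"
    unfolding sigma_min_def
    by (rule cInf_greatest[OF ne]) (use x0(2) in \<open>auto simp: sphere_def\<close>)
  with pos show spos: "sigma_min A > 0" by linarith
  show "(sigma_min A)^2 * (norm e)^2 \<le> (norm (A *v e))^2" for e
  proof (cases "e = 0")
    case True then show ?thesis by simp
  next
    case False
    hence ne0: "norm e > 0" by simp
    have "norm ((1 / norm e) *\<^sub>R e) = 1" using ne0 by simp
    hence "sigma_min A \<le> norm (A *v ((1 / norm e) *\<^sub>R e))" by (rule low)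
    also have "\<dots> = norm (A *v e) / norm e"
      using ne0 by (simp add: matrix_vector_mult_scaleR)
    finally have "sigma_min A * norm e \<le> norm (A *v e)" using ne0 by (simp add: field_simps)
    hence "(sigma_min A * norm e)^2 \<le> (norm (A *v e))^2"
      using spos ne0 by (intro power_mono) auto
    thus ?thesis by (simp add: power_mult_distrib)
  qed
qed

lemma orth:
  fixes A :: "real^'m^'n"
  assumes xs_min: "\<forall>x. (1/2) * (norm (A *v xs - b))^2 \<le> (1/2) * (norm (A *v x - b))^2"
  shows "(A *v xs - b) \<bullet> (A *v e) = 0"
proof -
  define r where "r = A *v xs - b"
  define w where "w = A *v e"
  define q where "q = r \<bullet> w"
  define W where "W = (norm w)^2"
  define s where "s = - q / (W + 1)"
  have Wnn: "W \<ge> 0" by (simp add: W_def)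
  have "(norm r)^2 \<le> (norm (A *v (xs + s *\<^sub>R e) - b))^2" using xs_min r_def by auto
  also have "A *v (xs + s *\<^sub>R e) - b = r + s *\<^sub>R w"
    by (simp add: r_def w_def matrix_vector_right_distrib matrix_vector_mult_scaleR)
  also have "(norm (r + s *\<^sub>R w))^2 = (norm r)^2 + 2 * s * q + s^2 * W"
    unfolding power2_norm_eq_inner q_def W_def
    by (simp add: inner_add_left inner_add_right inner_commute power2_eq_square algebra_simps)
  finally have h0: "0 \<le> 2 * s * q + s^2 * W" by simp
  have W1: "W + 1 \<noteq> 0" using Wnn by linarith
  have e1: "s * (W + 1) = - q" unfolding s_def using W1 by simp
  have "(2 * s * q + s^2 * W) * (W + 1)^2 = 2 * q * (s * (W + 1)) * (W + 1) + (s * (W + 1))^2 * W"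
    by (simp add: algebra_simps power2_eq_square)
  also have "\<dots> = q^2 * (- W - 2)" unfolding e1 by (simp add: algebra_simps power2_eq_square)
  finally have "0 \<le> q^2 * (- W - 2)" using h0
    by (metis zero_le_mult_iff zero_le_power2)
  moreover have "q^2 * (-W - 2) \<le> 0" using Wnn by (intro mult_nonneg_nonpos) auto
  ultimately have "q^2 * (-W-2) = 0" by simp
  hence "q = 0" using Wnn by simp
  thus ?thesis by (simp add: q_def r_def w_def)
qed

lemma step_bound:
  fixes A :: "real^'m^'n"
  assumes part: "\<And>f::'n \<Rightarrow> real. (\<Sum>i<d. \<Sum>j\<in>tau i. f j) = (\<Sum>j\<in>UNIV. f j)"
   and orth: "\<And>e. (A *v xs - b) \<bullet> (A *v e) = 0"
   and sig: "\<And>e. \<sigma>^2 * (norm e)^2 \<le> (norm (A *v e))^2"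
   and ppos: "\<And>i. i<d \<Longrightarrow> p i > 0" and psum: "(\<Sum>i<d. p i) = 1"
   and pS: "\<And>i. i<d \<Longrightarrow> (block_norm A (tau i))^2 / p i \<le> 2*S"
   and pd: "\<And>i. i<d \<Longrightarrow> 1 / p i \<le> 2 * real d"
   and gpos: "\<gamma> > 0" and tpos: "t > 0" and gt: "\<gamma>^2 * (1+t) * 2 * S \<le> \<gamma>"
  shows "(\<Sum>i<d. p i * (norm (sgd_step A b tau p \<gamma> x i - xs))^2)
     \<le> (1 - \<gamma>*\<sigma>^2) * (norm (x - xs))^2
        + \<gamma>^2 * (1 + 1/t) * 2 * real d * (\<Sum>i<d. (block_norm A (tau i))^2 * block_res_sq A b (tau i) xs)"
proof -
  define e where "e = x - xs"
  define g where "g i = (\<Sum>j\<in>tau i. ((A $ j) \<bullet> x - b $ j) *\<^sub>R (A $ j))" for i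
  define u where "u i = (\<Sum>j\<in>tau i. ((A $ j) \<bullet> e) *\<^sub>R (A $ j))" for i
  define v where "v i = (\<Sum>j\<in>tau i. ((A $ j) \<bullet> xs - b $ j) *\<^sub>R (A $ j))" for i
  define N where "N i = block_norm A (tau i)" for i
  define R where "R = (\<Sum>i<d. (N i)^2 * block_res_sq A b (tau i) xs)"
  define Ae where "Ae i = (\<Sum>j\<in>tau i. ((A $ j) \<bullet> e)^2)" for i
  have guv: "g i = u i + v i" for i
  proof -
    have "g i = (\<Sum>j\<in>tau i. ((A $ j) \<bullet> e) *\<^sub>R (A $ j) + ((A $ j) \<bullet> xs - b $ j) *\<^sub>R (A $ j))"
      unfolding g_def e_def
      by (intro sum.cong refl) (simp add: inner_diff_right scaleR_left_distrib[symmetric])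
    thus ?thesis by (simp add: u_def v_def sum.distrib)
  qed
  have expand: "p i * (norm (sgd_step A b tau p \<gamma> x i - xs))^2
      = p i * (norm e)^2 - 2 * \<gamma> * (e \<bullet> g i) + \<gamma>^2 * ((norm (g i))^2 / p i)" if "i < d" for i
  proof -
    have pi: "p i \<noteq> 0" using ppos[OF that] by simp
    have "sgd_step A b tau p \<gamma> x i - xs = e - (\<gamma> / p i) *\<^sub>R g i"
      by (simp add: sgd_step_def e_def g_def algebra_simps)
    hence "(norm (sgd_step A b tau p \<gamma> x i - xs))^2 = (norm (e - (\<gamma> / p i) *\<^sub>R g i))^2"
      by simp
    also have "\<dots> = (norm e)^2 - 2 * (\<gamma> / p i) * (e \<bullet> g i) + (\<gamma> / p i)^2 * (norm (g i))^2"
      unfolding power2_norm_eq_inner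
      by (simp add: inner_diff_left inner_diff_right inner_commute power2_eq_square algebra_simps)
    finally show ?thesis using pi by (simp add: field_simps power2_eq_square)
  qed
  have sum_eg: "(\<Sum>i<d. e \<bullet> g i) = (norm (A *v e))^2"
  proof -
    have "(\<Sum>i<d. e \<bullet> g i) = (\<Sum>i<d. \<Sum>j\<in>tau i. ((A $ j) \<bullet> x - b $ j) * ((A $ j) \<bullet> e))"
      unfolding g_def by (simp add: inner_sum_right inner_commute)
    also have "\<dots> = (\<Sum>j\<in>UNIV. ((A $ j) \<bullet> x - b $ j) * ((A $ j) \<bullet> e))" by (rule part)
    also have "\<dots> = (\<Sum>j\<in>UNIV. ((A $ j) \<bullet> e)^2 + ((A $ j) \<bullet> xs - b $ j) * ((A $ j) \<bullet> e))"
      by (intro sum.cong refl) (simp add: e_def inner_diff_right power2_eq_square algebra_simps)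
    also have "\<dots> = (norm (A *v e))^2 + (A *v xs - b) \<bullet> (A *v e)"
      by (simp add: sum.distrib Av_norm_sq inner_vec_def matrix_vector_mul_component)
    finally show ?thesis using orth by simp
  qed
  have sum_Ae: "(\<Sum>i<d. Ae i) = (norm (A *v e))^2"
    unfolding Ae_def by (simp add: part Av_norm_sq)
  have gb: "(norm (g i))^2 / p i \<le> (1+t) * (2 * S) * Ae i + (1 + 1/t) * (2 * real d) * ((N i)^2 * block_res_sq A b (tau i) xs)"
    if "i < d" for i
  proof -
    have pp: "p i > 0" using ppos[OF that] .
    have Aenn: "Ae i \<ge> 0" unfolding Ae_def by (intro sum_nonneg) simp
    have rnn: "(N i)^2 * block_res_sq A b (tau i) xs \<ge> 0"
      unfolding block_res_sq_def by (intro mult_nonneg_nonneg sum_nonneg) auto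
    have un: "(norm (u i))^2 \<le> (N i)^2 * Ae i"
      unfolding u_def N_def Ae_def by (rule comb_norm_sq)
    have vn: "(norm (v i))^2 \<le> (N i)^2 * block_res_sq A b (tau i) xs"
      unfolding v_def N_def block_res_sq_def by (rule comb_norm_sq)
    have "(norm (g i))^2 \<le> (1+t) * (norm (u i))^2 + (1 + 1/t) * (norm (v i))^2"
      unfolding guv by (rule young[OF tpos])
    also have "\<dots> \<le> (1+t) * ((N i)^2 * Ae i) + (1 + 1/t) * ((N i)^2 * block_res_sq A b (tau i) xs)"
      using tpos un vn by (intro add_mono mult_left_mono) auto
    finally have "(norm (g i))^2 / p i \<le>
        (1+t) * (((N i)^2 / p i) * Ae i) + (1 + 1/t) * ((1 / p i) * ((N i)^2 * block_res_sq A b (tau i) xs))"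
      using pp by (simp add: divide_right_mono add_divide_distrib[symmetric] field_simps)
    also have "\<dots> \<le> (1+t) * ((2 * S) * Ae i) + (1 + 1/t) * ((2 * real d) * ((N i)^2 * block_res_sq A b (tau i) xs))"
      using tpos Aenn rnn pS[OF that] pd[OF that] unfolding N_def
      by (intro add_mono mult_left_mono mult_right_mono) auto
    finally show ?thesis by (simp add: mult.assoc)
  qed
  have "(\<Sum>i<d. p i * (norm (sgd_step A b tau p \<gamma> x i - xs))^2)
      = (\<Sum>i<d. p i * (norm e)^2 - 2 * \<gamma> * (e \<bullet> g i) + \<gamma>^2 * ((norm (g i))^2 / p i))"
    by (intro sum.cong refl expand) simp
  also have "\<dots> = (norm e)^2 - 2 * \<gamma> * (norm (A *v e))^2 + \<gamma>^2 * (\<Sum>i<d. (norm (g i))^2 / p i)"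
    by (simp add: sum.distrib sum_subtractf sum_distrib_left[symmetric] sum_distrib_right[symmetric]
        psum sum_eg) (simp add: sum_distrib_left)
  also have "\<dots> \<le> (norm e)^2 - 2 * \<gamma> * (norm (A *v e))^2 + \<gamma>^2 *
      (\<Sum>i<d. (1+t) * (2 * S) * Ae i + (1 + 1/t) * (2 * real d) * ((N i)^2 * block_res_sq A b (tau i) xs))"
    using gb by (intro add_left_mono mult_left_mono sum_mono) auto
  also have "\<dots> = (norm e)^2 - 2 * \<gamma> * (norm (A *v e))^2 + (\<gamma>^2 * (1+t) * 2 * S) * (norm (A *v e))^2
       + \<gamma>^2 * (1 + 1/t) * 2 * real d * R"
    by (simp only: sum.distrib sum_distrib_left[symmetric] sum_Ae R_def[symmetric]) (simp add: algebra_simps)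
  also have "\<dots> \<le> (norm e)^2 - 2 * \<gamma> * (norm (A *v e))^2 + \<gamma> * (norm (A *v e))^2
       + \<gamma>^2 * (1 + 1/t) * 2 * real d * R"
    using mult_right_mono[OF gt, of "(norm (A *v e))^2"] by simp
  also have "\<dots> = (norm e)^2 - \<gamma> * (norm (A *v e))^2 + \<gamma>^2 * (1 + 1/t) * 2 * real d * R"
    by simp
  also have "\<dots> \<le> (norm e)^2 - \<gamma> * (\<sigma>^2 * (norm e)^2) + \<gamma>^2 * (1 + 1/t) * 2 * real d * R"
    using mult_left_mono[OF sig[of e], of \<gamma>] gpos by simp
  finally show ?thesis by (simp add: e_def R_def N_def algebra_simps)
qed

theorem corollary3p1:
  fixes A :: "real^'m^'n" and b :: "real^'n" and x0 xs :: "real^'m"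
    and bs d :: nat and tau :: "nat \<Rightarrow> 'n set" and \<epsilon> :: real
  assumes full_rank: "rank A = CARD('m)"
    and xs_min: "\<forall>x. (1/2) * (norm (A *v xs - b))^2 \<le> (1/2) * (norm (A *v x - b))^2"
    and bs_pos: "bs > 0" and bs_dvd: "bs dvd CARD('n)"
    and d_def: "d = CARD('n) div bs"
    and part_cover: "(\<Union>i<d. tau i) = UNIV"
    and part_disj: "\<forall>i<d. \<forall>j<d. i \<noteq> j \<longrightarrow> tau i \<inter> tau j = {}"
    and part_card: "\<forall>i<d. card (tau i) = bs"
    and eps_pos: "\<epsilon> > 0"
  shows
    "let p = batch_prob A tau d bs;
         S = (\<Sum>i<d. (block_norm A (tau i))^2);
         R = (\<Sum>i<d. (block_norm A (tau i))^2 * block_res_sq A b (tau i) xs);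
         \<sigma> = sigma_min A;
         \<gamma> = ((1/4) * \<epsilon>) / (\<epsilon> * S + real d * (1 / \<sigma>^2) * R);
         \<epsilon>0 = (norm (x0 - xs))^2;
         k = nat \<lceil>4 * ln (2 * \<epsilon>0 / \<epsilon>) * ((1 / \<sigma>^2) * S + real d * (1 / \<sigma>^4) * R / \<epsilon>)\<rceil>
     in expected_sq_err A b tau d p \<gamma> x0 xs k \<le> \<epsilon>"
proof -
  define p where "p = batch_prob A tau d bs"
  define N where "N i = block_norm A (tau i)" for i
  define S where "S = (\<Sum>i<d. (N i)^2)"
  define R where "R = (\<Sum>i<d. (N i)^2 * block_res_sq A b (tau i) xs)"
  define \<sigma> where "\<sigma> = sigma_min A"
  define \<gamma> where "\<gamma> = ((1/4) * \<epsilon>) / (\<epsilon> * S + real d * (1 / \<sigma>^2) * R)"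
  define \<epsilon>0 where "\<epsilon>0 = (norm (x0 - xs))^2"
  define X where "X = 4 * ln (2 * \<epsilon>0 / \<epsilon>) * ((1 / \<sigma>^2) * S + real d * (1 / \<sigma>^4) * R / \<epsilon>)"
  define k where "k = nat \<lceil>X\<rceil>"
  have dbs: "d * bs = CARD('n)" using bs_dvd d_def by simp
  have dpos: "d > 0" using dbs by (metis mult_is_0 zero_less_iff_neq_zero zero_less_card_finite)
  have part: "(\<Sum>i<d. \<Sum>j\<in>tau i. f j) = (\<Sum>j\<in>UNIV. f j)" for f :: "'n \<Rightarrow> real"
  proof -
    have "(\<Sum>j\<in>(\<Union>i<d. tau i). f j) = (\<Sum>i<d. \<Sum>j\<in>tau i. f j)"
      by (rule sum.UNION_disjoint) (use part_disj in auto)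
    thus ?thesis using part_cover by simp
  qed
  have inj: "inj ((*v) A)" using full_rank full_rank_injective by blast
  have spos: "\<sigma> > 0" and sig: "\<And>e. \<sigma>^2 * (norm e)^2 \<le> (norm (A *v e))^2"
    using sigma_props[OF inj] by (auto simp: \<sigma>_def)
  have orth: "\<And>e. (A *v xs - b) \<bullet> (A *v e) = 0" using orth[OF xs_min] .
  have Nnn: "N i \<ge> 0" for i unfolding N_def block_norm_def by (rule onorm_pos_le[OF bm_linear])
  have Rnn: "R \<ge> 0" unfolding R_def block_res_sq_def by (intro sum_nonneg mult_nonneg_nonneg) auto
  have Snn: "S \<ge> 0" unfolding S_def by (intro sum_nonneg) auto
  have SA: "(norm (A *v e))^2 \<le> S * (norm e)^2" for e
  proof -
    have "(norm (A *v e))^2 = (\<Sum>i<d. (norm (block_map A (tau i) e))^2)"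
      by (simp add: Av_norm_sq bm_norm_sq part)
    also have "\<dots> \<le> (\<Sum>i<d. (N i)^2 * (norm e)^2)"
    proof (rule sum_mono)
      fix i
      have "norm (block_map A (tau i) e) \<le> N i * norm e" unfolding N_def by (rule bm_norm_le)
      hence "(norm (block_map A (tau i) e))^2 \<le> (N i * norm e)^2" by (intro power_mono) auto
      thus "(norm (block_map A (tau i) e))^2 \<le> (N i)^2 * (norm e)^2" by (simp add: power_mult_distrib)
    qed
    finally show ?thesis by (simp add: S_def sum_distrib_right)
  qed
  obtain u :: "real^'m" where u: "norm u = 1" using vector_choose_size[of 1] by auto
  have sigS: "\<sigma>^2 \<le> S" using sig[of u] SA[of u] u by simp
  have Spos: "S > 0" using sigS spos by (smt (verit) zero_less_power)
  have p_eq: "p i = 1 / (2 * real d) + (1/2) * (N i)^2 / S" for i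
  proof -
    have "real bs / (2 * real CARD('n)) = 1 / (2 * real d)"
      using bs_pos by (simp flip: dbs)
    thus ?thesis by (simp add: p_def batch_prob_def N_def S_def)
  qed
  have ppos: "p i > 0" for i unfolding p_eq using dpos Spos by (intro add_pos_nonneg) auto
  have psum: "(\<Sum>i<d. p i) = 1"
  proof -
    have "(\<Sum>i<d. p i) = real d * (1 / (2 * real d)) + (1/2) * (\<Sum>i<d. (N i)^2) / S"
      unfolding p_eq by (simp add: sum.distrib sum_divide_distrib[symmetric] sum_distrib_left)
    also have "\<dots> = 1" using dpos Spos by (simp add: S_def[symmetric])
    finally show ?thesis .
  qed
  have pS: "(N i)^2 / p i \<le> 2 * S" for i
  proof -
    have "(N i)^2 \<le> 2 * S * p i" unfolding p_eq using dpos Spos by (simp add: field_simps)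
    thus ?thesis using ppos[of i] by (simp add: divide_le_eq)
  qed
  have pd: "1 / p i \<le> 2 * real d" for i
  proof -
    have "1 / (2 * real d) \<le> p i" unfolding p_eq using Spos by simp
    thus ?thesis using ppos[of i] dpos by (simp add: field_simps)
  qed
  define Q where "Q = \<epsilon> * S + real d * (1 / \<sigma>^2) * R"
  have Qpos: "Q > 0" unfolding Q_def using eps_pos Spos Rnn dpos spos
    by (intro add_pos_nonneg) auto
  have gpos: "\<gamma> > 0" unfolding \<gamma>_def Q_def[symmetric] using Qpos eps_pos by simp
  have gQ: "\<gamma> * Q = \<epsilon> / 4" unfolding \<gamma>_def Q_def[symmetric] using Qpos by simp
  have gS: "\<gamma> * S \<le> 1/4"
  proof -
    have "\<gamma> * (\<epsilon> * S) \<le> \<gamma> * Q" unfolding Q_def using gpos Rnn dpos spos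
      by (intro mult_left_mono) auto
    hence "\<epsilon> * (\<gamma> * S) \<le> \<epsilon> * (1/4)" using gQ by (simp add: algebra_simps)
    thus ?thesis using eps_pos by (rule mult_left_le_imp_le)
  qed
  define t where "t = (1 - 2 * \<gamma> * S) / (2 * \<gamma> * S)"
  have gSpos: "\<gamma> * S > 0" using gpos Spos by simp
  have tpos: "t > 0" unfolding t_def using gS gSpos by (intro divide_pos_pos) (auto simp: mult.commute)
  have aux: "1 + (1 - z)/z = 1/z" if "z \<noteq> 0" for z :: real using that by (simp add: field_simps)
  have gt: "\<gamma>^2 * (1+t) * 2 * S \<le> \<gamma>"
  proof -
    have nz: "2 * \<gamma> * S \<noteq> 0" using gpos Spos by simp
    have "1 + t = 1 / (2 * \<gamma> * S)" unfolding t_def using nz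
      using aux[of "2 * \<gamma> * S"] by simp
    hence "(1 + t) * (2 * \<gamma> * S) = 1" using nz by simp
    moreover have "\<gamma>^2 * (1+t) * 2 * S = \<gamma> * ((1 + t) * (2 * \<gamma> * S))"
      by (simp add: power2_eq_square algebra_simps)
    ultimately show ?thesis by simp
  qed
  have tt: "1 + 1/t = 1 / (1 - 2 * \<gamma> * S)" unfolding t_def using gS gSpos by (simp add: field_simps)
  define q where "q = 1 - \<gamma> * \<sigma>^2"
  define D where "D = \<gamma>^2 * (1 + 1/t) * 2 * real d * R"
  define c where "c = \<gamma> * \<sigma>^2"
  have cpos: "c > 0" unfolding c_def using gpos spos by simp
  have cle: "c \<le> 1/4" unfolding c_def using gS sigS gpos by (smt (verit) mult_left_mono)
  have qnn: "q \<ge> 0" using cle by (simp add: q_def c_def)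
  have step: "(\<Sum>i<d. p i * (norm (sgd_step A b tau p \<gamma> x i - xs))^2) \<le> q * (norm (x - xs))^2 + D" for x
    unfolding q_def D_def R_def N_def
    by (rule step_bound[OF part orth sig ppos psum _ _ gpos tpos gt])
       (use pS pd in \<open>auto simp: N_def\<close>)
  have main: "expected_sq_err A b tau d p \<gamma> x0 xs k \<le> q^k * \<epsilon>0 + D * (\<Sum>j<k. q^j)"
    using exp_sum_gen[OF _ psum step qnn, of k x0] ppos
    unfolding expected_sq_err_def sgd_iter_def \<epsilon>0_def by (auto intro: less_imp_le)
  have Dnn: "D \<ge> 0" unfolding D_def using tpos Rnn by simp
  have geo: "(\<Sum>j<k. q^j) \<le> 1 / c"
  proof -
    have "q \<noteq> 1" using gpos spos by (simp add: q_def)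
    hence "(\<Sum>j<k. q^j) = (1 - q^k) / (1 - q)" by (simp add: sum_gp_strict)
    also have "\<dots> \<le> 1 / (1 - q)" using qnn cpos by (intro divide_right_mono) (auto simp: q_def c_def)
    finally show ?thesis by (simp add: q_def c_def)
  qed
  have noise: "D / c \<le> \<epsilon> / 2"
  proof -
    have h: "1 - 2 * \<gamma> * S > 0" using gS by simp
    have "D / c = 2 * \<gamma> * real d * R / (\<sigma>^2 * (1 - 2 * \<gamma> * S))"
      unfolding D_def c_def tt using gpos spos h by (simp add: field_simps power2_eq_square)
    also have "\<dots> \<le> \<epsilon> / 2"
    proof -
      have e1: "\<gamma> * (real d * R / \<sigma>^2) = \<epsilon>/4 - \<gamma> * \<epsilon> * S"
        using gQ unfolding Q_def by (simp add: algebra_simps)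
      have "4 * (\<gamma> * real d * R) \<le> \<sigma>^2 * (\<epsilon> * (1 - 2 * \<gamma> * S))"
      proof -
        have "4 * (\<gamma> * real d * R) = \<sigma>^2 * (4 * (\<gamma> * (real d * R / \<sigma>^2)))"
          using spos by (simp add: field_simps)
        also have "\<dots> = \<sigma>^2 * (\<epsilon> - 4 * \<gamma> * \<epsilon> * S)" unfolding e1 by (simp add: algebra_simps)
        also have "\<dots> \<le> \<sigma>^2 * (\<epsilon> * (1 - 2 * \<gamma> * S))"
          using gpos Spos eps_pos by (intro mult_left_mono) (auto simp: algebra_simps)
        finally show ?thesis .
      qed
      thus ?thesis using spos h by (simp add: field_simps)
    qed
    finally show ?thesis .
  qed
  have contr: "q^k * \<epsilon>0 \<le> \<epsilon> / 2"
  proof (cases "\<epsilon>0 \<le> \<epsilon> / 2")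
    case True
    have "q^k \<le> 1" using qnn cpos by (intro power_le_one) (auto simp: q_def c_def)
    moreover have "\<epsilon>0 \<ge> 0" by (simp add: \<epsilon>0_def)
    ultimately have "q^k * \<epsilon>0 \<le> \<epsilon>0" using mult_left_le[of "q^k" "\<epsilon>0"] by (simp add: mult.commute)
    then show ?thesis using True by simp
  next
    case False
    define L where "L = ln (2 * \<epsilon>0 / \<epsilon>)"
    have e0pos: "\<epsilon>0 > 0" using False eps_pos by simp
    have gt1: "2 * \<epsilon>0 / \<epsilon> > 1" using False eps_pos by (simp add: field_simps)
    have Lpos: "L > 0" unfolding L_def using gt1 by simp
    have XL: "X = L / c"
    proof -
      have "1 / c = 4 * ((1 / \<sigma>^2) * S + real d * (1 / \<sigma>^4) * R / \<epsilon>)"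
      proof -
        have "c = (\<epsilon> / 4 * \<sigma>^2) / Q" unfolding c_def \<gamma>_def Q_def[symmetric] by simp
        hence "1 / c = Q / (\<epsilon> / 4 * \<sigma>^2)" by simp
        also have "\<dots> = 4 * ((1 / \<sigma>^2) * S + real d * (1 / \<sigma>^4) * R / \<epsilon>)"
          unfolding Q_def using spos eps_pos by (simp add: field_simps power2_eq_square power4_eq_xxxx)
        finally show ?thesis .
      qed
      moreover have "L / c = L * (1 / c)" by simp
      moreover have "X = L * (4 * ((1 / \<sigma>^2) * S + real d * (1 / \<sigma>^4) * R / \<epsilon>))"
        unfolding X_def L_def by (simp only: mult.assoc mult.left_commute[of 4])
      ultimately show ?thesis by simp
    qed
    have kX: "real k \<ge> X" unfolding k_def by linarith
    have "q^k \<le> (exp (- c))^k" unfolding q_def c_def[symmetric]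
    proof (rule power_mono)
      show "1 - c \<le> exp (- c)" using exp_ge_add_one_self[of "- c"] by simp
      show "0 \<le> 1 - c" using cle by simp
    qed
    also have "\<dots> = exp (- (c * real k))" by (simp add: exp_of_nat_mult[symmetric] mult.commute)
    also have "\<dots> \<le> exp (- L)"
    proof -
      have "c * real k \<ge> c * X" using kX cpos by (intro mult_left_mono) auto
      hence "c * real k \<ge> L" unfolding XL using cpos by simp
      thus ?thesis by simp
    qed
    also have "\<dots> = \<epsilon> / (2 * \<epsilon>0)" unfolding L_def using e0pos eps_pos by (simp add: exp_minus)
    finally have "q^k * \<epsilon>0 \<le> \<epsilon> / (2 * \<epsilon>0) * \<epsilon>0" using e0pos by (intro mult_right_mono) auto
    thus ?thesis using e0pos by simp
  qed
  have "expected_sq_err A b tau d p \<gamma> x0 xs k \<le> q^k * \<epsilon>0 + D * (1 / c)"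
    using main geo Dnn by (smt (verit) mult_left_mono)
  also have "\<dots> \<le> \<epsilon>" using contr noise by (simp only: times_divide_eq_right mult_1_right)
  finally show ?thesis
    unfolding Let_def p_def[symmetric] N_def[symmetric] S_def[symmetric] R_def[symmetric]
      \<sigma>_def[symmetric] \<gamma>_def[symmetric] \<epsilon>0_def[symmetric] X_def[symmetric] k_def[symmetric] .
qed

end
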